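(* Let $n\in\mathbb{N}$, $\mathbb{K}\in\{\mathbb{R},\mathbb{C}\}$, let $\boldsymbol a=\{a_k\}_{k=0}^n\subset\mathbb{K}$ and $f_{\boldsymbol a,n}(x)=\sum_{k=0}^n a_kT_k(x)$ for $x\in[-1,1]$. There exists a constant $C>0$ such that, for $\epsilon>0$: (i) if $\mathbb{K}=\mathbb{R}$, there exist ReLU neural networks $\Phi_{\boldsymbol a,n,\epsilon}\in\mathcal{NN}_{L,13,1,1}$ with \[ L\le C\Big(n^2+n\log\tfrac1\epsilon+n\log\big(\max_{k=0,\dots,n}|a_k|\big)\Big)\quad\text{as }\epsilon\to0 \] such that $\|f_{\boldsymbol a,n}-\Phi_{\boldsymbol a,n,\epsilon}\|_{L^\infty((-1,1))}\le\epsilon$; (ii) if $\mathbb{K}=\mathbb{C}$, there exist ReLU neural networks $\Phi_{\boldsymbol a,n,\epsilon}\in\mathcal{NN}_{L,15,1,2}$ with $L$ bounded as in (i) such that $\|f_{\boldsymbol a,n}-(\Phi_{\boldsymbol a,n,\epsilon})_1-\imath(\Phi_{\boldsymbol a,n,\epsilon})_2\|_{L^\infty((-1,1))}\le\epsilon$, where $(\cdot)_1,(\cdot)_2$ denote the first and second outputs. In either case all weights are bounded in absolute value by $\max\{\max_{k=0,\dots,n}|a_k|,2\}$.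
   Context: $T_n(x)=\cos(n\arccos x)$, $x\in[-1,1]$, is the $n$-th Chebyshev polynomial of the first kind. ReLU networks: $\varrho(x)=\max\{x,0\}$ componentwise; $\mathcal{NN}_{L,M,\ell_0,\ell_L}$ is the set of maps $\mathbb{R}^{\ell_0}\to\mathbb{R}^{\ell_L}$ of the form $\mathcal A_{L'}\circ\varrho\circ\cdots\circ\varrho\circ\mathcal A_1$ (or $\mathcal A_1$), affine $\mathcal A_k(\mathbf x)=\mathbf W_k\mathbf x+\mathbf b_k$, depth $L'\le L$, width $\max_k\ell_k\le M$; weights are the entries of $\mathbf W_k,\mathbf b_k$. *)

theory Defs
  imports "HOL-Analysis.Analysis"
begin

definition cheb :: "nat \<Rightarrow> real \<Rightarrow> real" where
  "cheb n x = cos (real n * arccos x)"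

definition relu :: "real \<Rightarrow> real" where
  "relu t = max t 0"

text \<open>A layer is an affine map x |-> W x + b, with W given as a list of rows.
  A network is the list of its layers [A_1, ..., A_L] (first layer first).\<close>
type_synonym layer = "real list list \<times> real list"

definition affine :: "layer \<Rightarrow> real list \<Rightarrow> real list" where
  "affine l x = map2 (+) (map (\<lambda>row. sum_list (map2 (*) row x)) (fst l)) (snd l)"

fun realize :: "layer list \<Rightarrow> real list \<Rightarrow> real list" where
  "realize [] x = x"
| "realize [l] x = affine l x"
| "realize (l # l' # ls) x = realize (l' # ls) (map relu (affine l x))"

fun arch :: "nat \<Rightarrow> layer list \<Rightarrow> nat \<Rightarrow> bool" where
  "arch d0 [] dL = False"
| "arch d0 [(W, b)] dL =
     (length W = dL \<and> length b = dL \<and> (\<forall>r\<in>set W. length r = d0))"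
| "arch d0 ((W, b) # l' # ls) dL =
     (length b = length W \<and> (\<forall>r\<in>set W. length r = d0) \<and> arch (length W) (l' # ls) dL)"

definition width :: "nat \<Rightarrow> layer list \<Rightarrow> nat" where
  "width d0 \<Phi> = Max (insert d0 (set (map (\<lambda>l. length (fst l)) \<Phi>)))"

definition depth :: "layer list \<Rightarrow> nat" where
  "depth \<Phi> = length \<Phi>"

definition weights :: "layer list \<Rightarrow> real list" where
  "weights \<Phi> = concat (map (\<lambda>l. concat (fst l) @ snd l) \<Phi>)"

text \<open>The class NN_{L,M,l0,lL} (as networks, i.e. with their weights).\<close>
definition NN :: "nat \<Rightarrow> nat \<Rightarrow> nat \<Rightarrow> nat \<Rightarrow> layer list set" where
  "NN L M d0 dL = {\<Phi>. arch d0 \<Phi> dL \<and> depth \<Phi> \<le> L \<and> width d0 \<Phi> \<le> M}"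

end

theory Submission
  imports Defs
begin


definition hat :: "real \<Rightarrow> real" where "hat t = 1 - \<bar>2*t - 1\<bar>"
definition Dsum :: "nat \<Rightarrow> real \<Rightarrow> real" where
  "Dsum s t = (\<Sum>j<s. (hat ^^ Suc j) t / 4^j)"
definition Fm :: "nat \<Rightarrow> real \<Rightarrow> real" where "Fm m t = t - Dsum m t / 4"

lemma hat_range: "0 \<le> t \<Longrightarrow> t \<le> 1 \<Longrightarrow> 0 \<le> hat t \<and> hat t \<le> 1"
  by (auto simp: hat_def)

lemma hatpow_range: "0 \<le> t \<Longrightarrow> t \<le> 1 \<Longrightarrow> 0 \<le> (hat ^^ j) t \<and> (hat ^^ j) t \<le> 1"
  by (induction j) (auto simp: hat_range)

lemma hat_sym: "hat (1 - t) = hat t" by (simp add: hat_def abs_if)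

lemma hatpow_sym: "(hat ^^ Suc j) (1 - t) = (hat ^^ Suc j) t"
  by (simp only: funpow_Suc_right o_apply hat_sym)

lemma Dsum_nonneg: assumes "0 \<le> t" "t \<le> 1" shows "0 \<le> Dsum s t"
proof -
  have "0 \<le> (hat ^^ Suc j) t" for j using hatpow_range[of t "Suc j"] assms by blast
  then show ?thesis unfolding Dsum_def by (intro sum_nonneg divide_nonneg_pos) auto
qed

lemma Dsum_sym: "Dsum s (1 - t) = Dsum s t"
  unfolding Dsum_def by (rule sum.cong[OF refl], subst hatpow_sym, rule refl)

lemma Dsum_half: assumes "0 \<le> t" "t \<le> 1/2"
  shows "Dsum (Suc m) t = 2*t + Dsum m (2*t) / 4"
proof -
  have h: "hat t = 2*t" using assms by (simp add: hat_def)
  have "Dsum (Suc m) t = hat t + (\<Sum>j<m. (hat ^^ Suc (Suc j)) t / 4^(Suc j))"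
    unfolding Dsum_def by (subst sum.lessThan_Suc_shift) simp
  also have "(\<Sum>j<m. (hat ^^ Suc (Suc j)) t / 4^(Suc j)) = (\<Sum>j<m. (hat ^^ Suc j) (2*t) / 4^j) / 4"
    by (simp only: funpow_Suc_right[of "Suc _"] o_apply h sum_divide_distrib) (simp add: field_simps)
  finally show ?thesis using h by (simp add: Dsum_def)
qed

lemma Fm_sq: "0 \<le> t \<Longrightarrow> t \<le> 1 \<Longrightarrow> 0 \<le> Fm m t - t^2 \<and> Fm m t - t^2 \<le> 1/4^(Suc m)"
proof (induction m arbitrary: t)
  case 0
  have "t^2 \<le> t" using 0 mult_left_le_one_le[of t t] by (simp add: power2_eq_square)
  have "t - t^2 \<le> 1/4" using sum_squares_ge_zero[of "t - 1/2" 0] by (simp add: power2_eq_square algebra_simps)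
  then show ?case using \<open>t^2 \<le> t\<close> by (simp add: Fm_def Dsum_def)
next
  case (Suc m)
  have half: "0 \<le> Fm (Suc m) z - z^2 \<and> Fm (Suc m) z - z^2 \<le> 1/4^(Suc (Suc m))"
    if s: "0 \<le> z" "z \<le> 1/2" for z
  proof -
    have e: "Fm (Suc m) z - z^2 = (Fm m (2*z) - (2*z)^2) / 4"
      using Dsum_half[OF s, of m] by (simp add: Fm_def power2_eq_square field_simps)
    show ?thesis using Suc.IH[of "2*z"] s unfolding e by simp
  qed
  show ?case
  proof (cases "t \<le> 1/2")
    case True then show ?thesis using half Suc.prems by blast
  next
    case False
    have e: "Fm (Suc m) t - t^2 = Fm (Suc m) (1-t) - (1-t)^2"
      using Dsum_sym[of "Suc m" t] by (simp add: Fm_def power2_eq_square field_simps)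
    show ?thesis using half[of "1-t"] False Suc.prems unfolding e by simp
  qed
qed

definition pa :: "nat \<Rightarrow> real \<Rightarrow> real \<Rightarrow> real" where
  "pa m x y = Dsum m ((x - y + 2)/4) - Dsum m ((x + y + 2)/4)"

lemma pa_err: assumes "\<bar>x\<bar> \<le> 1" "\<bar>y\<bar> \<le> 1" shows "\<bar>pa m x y - x*y\<bar> \<le> 1/4^m"
proof -
  define tu where "tu = (x + y + 2)/4"
  define tw where "tw = (x - y + 2)/4"
  have r: "0 \<le> tu" "tu \<le> 1" "0 \<le> tw" "tw \<le> 1" using assms by (auto simp: tu_def tw_def)
  have e: "pa m x y - x*y = 4*(Fm m tu - tu^2) - 4*(Fm m tw - tw^2)"
    by (simp add: pa_def Fm_def tu_def tw_def power2_eq_square field_simps)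
  show ?thesis using Fm_sq[OF r(1,2), of m] Fm_sq[OF r(3,4), of m] unfolding e by (simp add: abs_le_iff)
qed

lemma cheb0: "cheb 0 x = 1" by (simp add: cheb_def)
lemma cheb1: "\<bar>x\<bar> \<le> 1 \<Longrightarrow> cheb 1 x = x" by (simp add: cheb_def cos_arccos_abs)
lemma cheb_bound: "\<bar>cheb k x\<bar> \<le> 1" by (simp add: cheb_def)
lemma cheb_rec: assumes "\<bar>x\<bar> \<le> 1"
  shows "cheb (Suc (Suc k)) x = 2 * x * cheb (Suc k) x - cheb k x"
proof -
  define th where "th = arccos x"
  have cx: "cos th = x" using assms by (simp add: th_def cos_arccos_abs)
  have a: "real (Suc (Suc k)) * th = (real (Suc k) * th) + th" by (simp add: algebra_simps)
  have b: "real k * th = (real (Suc k) * th) - th" by (simp add: algebra_simps)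
  show ?thesis unfolding cheb_def th_def[symmetric] a b cos_add cos_diff cx by simp
qed

definition clip :: "real \<Rightarrow> real" where "clip z = max (-1) (min 1 z)"

lemma clip_err: "\<bar>T\<bar> \<le> 1 \<Longrightarrow> \<bar>clip z - T\<bar> \<le> \<bar>z - T\<bar>"
  by (auto simp: clip_def abs_le_iff)

lemma clip_bound: "\<bar>clip z\<bar> \<le> 1" by (auto simp: clip_def)

fun yy :: "nat \<Rightarrow> real \<Rightarrow> nat \<Rightarrow> real \<times> real" where
  "yy m x 0 = (1, x)"
| "yy m x (Suc k) = (clip (snd (yy m x k)), 2 * pa m x (clip (snd (yy m x k))) - fst (yy m x k))"

lemma yy_fst_bound: "\<bar>fst (yy m x k)\<bar> \<le> 1"
  by (cases k) (auto simp: clip_bound)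

lemma tri3: "\<bar>a\<bar> \<le> A \<Longrightarrow> \<bar>b\<bar> \<le> B \<Longrightarrow> \<bar>c\<bar> \<le> Cc \<Longrightarrow> \<bar>2*a + b - c\<bar> \<le> 2*A + B + (Cc::real)"
  by (simp add: abs_le_iff)

lemma yy_err: assumes "\<bar>x\<bar> \<le> 1"
  shows "\<bar>fst (yy m x k) - cheb k x\<bar> \<le> 5^k / 4^m \<and> \<bar>snd (yy m x k) - cheb (Suc k) x\<bar> \<le> 5^(Suc k) / 4^m"
proof (induction k)
  case 0
  then show ?case using assms cheb1[OF assms] cheb0 by simp
next
  case (Suc k)
  define y where "y = clip (snd (yy m x k))"
  define d where "d = (1::real)/4^m"
  have d0: "0 \<le> d" by (simp add: d_def)
  have y1: "\<bar>y\<bar> \<le> 1" by (simp add: y_def clip_bound)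
  have e1: "\<bar>y - cheb (Suc k) x\<bar> \<le> 5^(Suc k) * d"
    using Suc.IH clip_err[OF cheb_bound, of "snd (yy m x k)" "Suc k" x] by (simp add: y_def d_def)
  have e0: "\<bar>fst (yy m x k) - cheb k x\<bar> \<le> 5^k * d" using Suc.IH by (simp add: d_def)
  have ep: "\<bar>pa m x y - x*y\<bar> \<le> d" using pa_err[OF assms y1] by (simp add: d_def)
  have "snd (yy m x (Suc k)) - cheb (Suc (Suc k)) x
      = 2 * (pa m x y - x*y) + 2*x*(y - cheb (Suc k) x) - (fst (yy m x k) - cheb k x)"
    by (simp add: y_def cheb_rec[OF assms] algebra_simps)
  also have "\<bar>\<dots>\<bar> \<le> 2*d + 2*(5^(Suc k) * d) + 5^k*d"
  proof -
    have "\<bar>2*x*(y - cheb (Suc k) x)\<bar> \<le> 2 * (5^(Suc k) * d)"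
    proof -
      have "\<bar>x\<bar> * \<bar>y - cheb (Suc k) x\<bar> \<le> 1 * (5^(Suc k) * d)"
        by (rule mult_mono[OF assms e1]) (auto simp: d0)
      moreover have "\<bar>2*x*(y - cheb (Suc k) x)\<bar> = 2 * (\<bar>x\<bar> * \<bar>y - cheb (Suc k) x\<bar>)"
        by (simp add: abs_mult)
      ultimately show ?thesis by linarith
    qed
    then show ?thesis using tri3[OF ep _ e0] by blast
  qed
  also have "\<dots> \<le> 5^(Suc (Suc k)) * d"
  proof -
    have "(1::real) \<le> 5^k" by simp
    then have "2 + 2*5^(Suc k) + 5^k \<le> (5::real)^(Suc (Suc k))" by (simp only: power_Suc)
    then have "(2 + 2*5^(Suc k) + 5^k) * d \<le> (5::real)^(Suc (Suc k)) * d"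
      using d0 by (rule mult_right_mono)
    then show ?thesis by (simp add: algebra_simps)
  qed
  finally have "\<bar>snd (yy m x (Suc k)) - cheb (Suc (Suc k)) x\<bar> \<le> 5^(Suc (Suc k)) / 4^m"
    by (simp add: d_def)
  moreover have "\<bar>fst (yy m x (Suc k)) - cheb (Suc k) x\<bar> \<le> 5^(Suc k) / 4^m"
    using e1 by (simp add: y_def d_def)
  ultimately show ?case by simp
qed



definition lin :: "(nat \<times> real) list \<Rightarrow> real list \<Rightarrow> real" where
  "lin lf v = sum_list (map (\<lambda>kc. snd kc * v ! fst kc) lf)"
definition ent :: "(nat \<times> real) list \<Rightarrow> nat \<Rightarrow> real" where
  "ent lf j = sum_list (map (\<lambda>kc. if fst kc = j then snd kc else 0) lf)"
definition mk :: "nat \<Rightarrow> ((nat \<times> real) list \<times> real) list \<Rightarrow> layer" where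
  "mk d ns = (map (\<lambda>nb. map (ent (fst nb)) [0..<d]) ns, map snd ns)"

lemma lin_simps[simp]: "lin [] v = 0" "lin (kc # lf) v = snd kc * v ! fst kc + lin lf v"
  by (simp_all add: lin_def)

lemma ent_Cons: "ent (kc # lf) j = (if fst kc = j then snd kc else 0) + ent lf j"
  by (simp add: ent_def)

lemma row_lin:
  assumes "\<forall>kc\<in>set lf. fst kc < d"
  shows "(\<Sum>j<d. ent lf j * v ! j) = lin lf v"
  using assms
proof (induction lf)
  case Nil then show ?case by (simp add: ent_def)
next
  case (Cons kc lf)
  have e: "ent (kc # lf) j * v ! j = (if fst kc = j then snd kc * v ! j else 0) + ent lf j * v ! j" for j
    by (simp add: ent_Cons distrib_right)
  have "(\<Sum>j<d. ent (kc # lf) j * v ! j) = (\<Sum>j<d. (if fst kc = j then snd kc * v ! j else 0)) + (\<Sum>j<d. ent lf j * v ! j)"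
    unfolding e by (simp add: sum.distrib)
  also have "(\<Sum>j<d. (if fst kc = j then snd kc * v ! j else 0)) = snd kc * v ! fst kc"
    using Cons.prems by (simp add: sum.delta)
  finally show ?case using Cons by simp
qed

lemma affine_mk:
  assumes "length v = d" "\<forall>nb\<in>set ns. \<forall>kc\<in>set (fst nb). fst kc < d"
  shows "affine (mk d ns) v = map (\<lambda>nb. lin (fst nb) v + snd nb) ns"
proof -
  have "sum_list (map2 (*) (map (ent (fst nb)) [0..<d]) v) = lin (fst nb) v" if "nb \<in> set ns" for nb
  proof -
    have "map2 (*) (map (ent (fst nb)) [0..<d]) v = map (\<lambda>j. ent (fst nb) j * v ! j) [0..<d]"
      using assms(1) by (simp add: list_eq_iff_nth_eq)
    then have "sum_list (map2 (*) (map (ent (fst nb)) [0..<d]) v) = (\<Sum>j<d. ent (fst nb) j * v ! j)"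
      by (simp add: sum_set_upt_conv_sum_list_nat[symmetric] atLeast0LessThan)
    then show ?thesis using row_lin[of "fst nb" d v] assms(2) that by simp
  qed
  then show ?thesis unfolding affine_def mk_def
    by (simp add: list_eq_iff_nth_eq)
qed

definition H :: "real list \<Rightarrow> layer \<Rightarrow> real list" where
  "H v l = map relu (affine l v)"

lemma realize_Cons: "ls \<noteq> [] \<Longrightarrow> realize (a # ls) v = realize ls (map relu (affine a v))"
  by (cases ls) auto

lemma realize_snoc: "realize (ls @ [l]) v = affine l (foldl H v ls)"
proof (induction ls arbitrary: v)
  case Nil then show ?case by simp
next
  case (Cons a ls)
  then show ?case by (simp add: realize_Cons H_def)
qed

lemma arch_mk_single: "length ns = dL \<Longrightarrow> arch d [mk d ns] dL"
  by (simp add: mk_def)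

lemma arch_mk_cons: "ls \<noteq> [] \<Longrightarrow> arch (length ns) ls dL \<Longrightarrow> arch d (mk d ns # ls) dL"
  by (cases ls) (auto simp: mk_def)

lemma arch_chain:
  assumes "\<forall>l\<in>set mids. \<exists>ns. l = mk W ns \<and> length ns = W" "length nsF = r"
  shows "arch W (mids @ [mk W nsF]) r"
  using assms(1)
proof (induction mids)
  case Nil then show ?case using assms(2) by (simp add: arch_mk_single)
next
  case (Cons a mids)
  then obtain ns where "a = mk W ns" "length ns = W" by auto
  then show ?case using Cons by (auto intro!: arch_mk_cons)
qed

lemma width_le: "1 \<le> M \<Longrightarrow> (\<forall>l\<in>set \<Phi>. length (fst l) \<le> M) \<Longrightarrow> width 1 \<Phi> \<le> M"
  by (auto simp: width_def)

definition okn :: "real \<Rightarrow> nat \<Rightarrow> ((nat \<times> real) list \<times> real) list \<Rightarrow> bool" where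
  "okn B d ns = (\<forall>nb\<in>set ns. distinct (map fst (fst nb)) \<and> (\<forall>kc\<in>set (fst nb). fst kc < d \<and> \<bar>snd kc\<bar> \<le> B) \<and> \<bar>snd nb\<bar> \<le> B)"

lemma ent_notin: "j \<notin> fst ` set lf \<Longrightarrow> ent lf j = 0"
  by (induction lf) (auto simp: ent_def)

lemma ent_bound: "distinct (map fst lf) \<Longrightarrow> \<forall>kc\<in>set lf. \<bar>snd kc\<bar> \<le> B \<Longrightarrow> 0 \<le> B \<Longrightarrow> \<bar>ent lf j\<bar> \<le> B"
proof (induction lf)
  case Nil then show ?case by (simp add: ent_def)
next
  case (Cons kc lf)
  show ?case
  proof (cases "fst kc = j")
    case True
    then have "ent lf j = 0" using Cons.prems(1) by (intro ent_notin) auto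
    then show ?thesis using True Cons.prems by (simp add: ent_Cons)
  next
    case False
    then show ?thesis using Cons by (simp add: ent_Cons)
  qed
qed

lemma weights_mk: assumes "okn B d ns" "0 \<le> B"
  shows "\<forall>w\<in>set (concat (fst (mk d ns)) @ snd (mk d ns)). \<bar>w\<bar> \<le> B"
  using assms ent_bound unfolding okn_def mk_def by fastforce

lemma weights_all: "(\<forall>l\<in>set \<Phi>. \<forall>w\<in>set (concat (fst l) @ snd l). \<bar>w\<bar> \<le> B) \<Longrightarrow> \<forall>w\<in>set (weights \<Phi>). \<bar>w\<bar> \<le> B"
  unfolding weights_def by auto

lemma okn_append: "okn B d (xs @ ys) = (okn B d xs \<and> okn B d ys)"
  by (auto simp: okn_def)

lemma len_mk: "length (fst (mk d ns)) = length ns" by (simp add: mk_def)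



definition pairs :: "nat \<Rightarrow> (nat \<Rightarrow> 'a) \<Rightarrow> (nat \<Rightarrow> 'a) \<Rightarrow> 'a list" where
  "pairs r f g = concat (map (\<lambda>i. [f i, g i]) [0..<r])"

lemma pairs_len[simp]: "length (pairs r f g) = 2*r"
  by (induction r) (auto simp: pairs_def)

lemma pairs_nth: "i < r \<Longrightarrow> pairs r f g ! (2*i) = f i \<and> pairs r f g ! (Suc (2*i)) = g i"
proof (induction r)
  case 0 then show ?case by simp
next
  case (Suc r)
  have e: "pairs (Suc r) f g = pairs r f g @ [f r, g r]" by (simp add: pairs_def)
  show ?case
  proof (cases "i < r")
    case True then show ?thesis using Suc by (simp add: e nth_append)
  next
    case False then have "i = r" using Suc by simp
    then show ?thesis by (simp add: e nth_append)
  qed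
qed

lemma map_pairs: "map h (pairs r f g) = pairs r (h o f) (h o g)"
  by (simp add: pairs_def map_concat o_def)

lemma pairs_cong: "(\<And>i. i < r \<Longrightarrow> f i = f' i) \<Longrightarrow> (\<And>i. i < r \<Longrightarrow> g i = g' i) \<Longrightarrow> pairs r f g = pairs r f' g'"
  unfolding pairs_def by (rule arg_cong[where f=concat], rule map_cong) auto

lemma set_pairs: "set (pairs r f g) = f ` {..<r} \<union> g ` {..<r}"
  by (auto simp: pairs_def)

definition Sp :: "nat \<Rightarrow> (nat \<Rightarrow> real) \<Rightarrow> real list" where
  "Sp r S = pairs r (\<lambda>i. relu (S i)) (\<lambda>i. relu (- S i))"

lemma relu_nonneg: "0 \<le> t \<Longrightarrow> relu t = t" by (simp add: relu_def)
lemma relu_ge0: "0 \<le> relu t" by (simp add: relu_def)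
lemma relu_diff: "relu t - relu (- t) = t" by (simp add: relu_def)
lemma relu_clip: "relu (v + 1) - relu (v - 1) = clip v + 1"
  by (simp add: relu_def clip_def)
lemma relu_hat: "1 - relu (2*g - 1) - relu (1 - 2*g) = hat g"
  by (simp add: relu_def hat_def)

definition stR :: "nat \<Rightarrow> real \<Rightarrow> real \<Rightarrow> real \<Rightarrow> real \<Rightarrow> (nat \<Rightarrow> real) \<Rightarrow> real list" where
  "stR r x yp a b S = [x+1, yp+1, a, b, 0, 0, 0, 0, 0] @ Sp r S"

definition stP :: "nat \<Rightarrow> real \<Rightarrow> real \<Rightarrow> real \<Rightarrow> nat \<Rightarrow> (nat \<Rightarrow> real) \<Rightarrow> real list" where
  "stP r x yp y s S = [x+1, yp+1, y+1,
     relu (2 * (hat^^s) ((x+y+2)/4) - 1), relu (1 - 2 * (hat^^s) ((x+y+2)/4)), Dsum s ((x+y+2)/4),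
     relu (2 * (hat^^s) ((x-y+2)/4) - 1), relu (1 - 2 * (hat^^s) ((x-y+2)/4)), Dsum s ((x-y+2)/4)] @ Sp r S"

lemma len_stR[simp]: "length (stR r x yp a b S) = 9 + 2*r" by (simp add: stR_def Sp_def)
lemma len_stP[simp]: "length (stP r x yp y s S) = 9 + 2*r" by (simp add: stP_def Sp_def)

lemma nth_S: "i < r \<Longrightarrow> (L @ Sp r S) ! (length L + 2*i) = relu (S i) \<and> (L @ Sp r S) ! (length L + Suc (2*i)) = relu (- S i)"
  by (simp add: nth_append Sp_def pairs_nth)

lemma nth_S9: "length L = 9 \<Longrightarrow> i < r \<Longrightarrow> (L @ Sp r S) ! (9 + 2*i) = relu (S i) \<and> (L @ Sp r S) ! (10 + 2*i) = relu (- S i)"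
  using nth_S[of i r L S] by simp

definition carryS :: "nat \<Rightarrow> ((nat \<times> real) list \<times> real) list" where
  "carryS r = pairs r (\<lambda>i. ([(9+2*i, 1)], 0)) (\<lambda>i. ([(10+2*i, 1)], 0))"

definition A_ns :: "nat \<Rightarrow> ((nat \<times> real) list \<times> real) list" where
  "A_ns r = [([(0,1)],0), ([(1,1)],0), ([(2,1),(3,-1)],0),
    ([(0,1/2),(2,1/2),(3,-1/2)], -1), ([(0,-1/2),(2,-1/2),(3,1/2)], 1), ([],0),
    ([(0,1/2),(2,-1/2),(3,1/2)], 0), ([(0,-1/2),(2,1/2),(3,-1/2)], 0), ([],0)] @ carryS r"

lemma idx_carry: "\<forall>nb\<in>set (carryS r). \<forall>kc\<in>set (fst nb). fst kc < 9 + 2*r"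
  by (auto simp: carryS_def set_pairs)

lemma carry_eval:
  assumes "length L = 9"
  shows "map (\<lambda>nb. relu (lin (fst nb) (L @ Sp r S) + snd nb)) (carryS r) = Sp r S"
proof -
  have "map (\<lambda>nb. relu (lin (fst nb) (L @ Sp r S) + snd nb)) (carryS r) = pairs r (\<lambda>i. relu (S i)) (\<lambda>i. relu (- S i))"
    unfolding carryS_def map_pairs
    by (rule pairs_cong) (auto simp: nth_S9[OF assms] relu_nonneg relu_ge0)
  then show ?thesis by (simp only: Sp_def)
qed

lemma layerA:
  assumes "\<bar>x\<bar> \<le> 1" "\<bar>yp\<bar> \<le> 1" "\<bar>y\<bar> \<le> 1" "a = y + 1 + b"
  shows "H (stR r x yp a b S) (mk (9+2*r) (A_ns r)) = stP r x yp y 0 S"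
proof -
  have idx: "\<forall>nb\<in>set (A_ns r). \<forall>kc\<in>set (fst nb). fst kc < 9 + 2*r"
    using idx_carry[of r] by (auto simp: A_ns_def)
  show ?thesis
    unfolding H_def affine_mk[OF len_stR idx]
    unfolding stR_def A_ns_def map_map map_append o_def
    apply (subst carry_eval, simp)
    unfolding stP_def
    using assms apply simp
    apply (intro conjI)
    apply (simp_all add: relu_nonneg Dsum_def)
    apply (rule arg_cong[where f=relu], simp add: field_simps)+
    done
qed


definition B_ns :: "nat \<Rightarrow> nat \<Rightarrow> ((nat \<times> real) list \<times> real) list" where
  "B_ns r s = [([(0,1)],0), ([(1,1)],0), ([(2,1)],0),
    ([(3,-2),(4,-2)],1), ([(3,2),(4,2)],-1), ([(5,1),(3,-1/4^s),(4,-1/4^s)], 1/4^s),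
    ([(6,-2),(7,-2)],1), ([(6,2),(7,2)],-1), ([(8,1),(6,-1/4^s),(7,-1/4^s)], 1/4^s)] @ carryS r"

lemma Dsum_Suc: "Dsum (Suc s) t = Dsum s t + hat ((hat^^s) t) / 4^s"
  by (simp add: Dsum_def)

lemma hat_relu: "hat g = 1 - relu (2*g - 1) - relu (1 - 2*g)"
  using relu_hat[of g] by simp

lemma layerB:
  assumes "\<bar>x\<bar> \<le> 1" "\<bar>yp\<bar> \<le> 1" "\<bar>y\<bar> \<le> 1"
  shows "H (stP r x yp y s S) (mk (9+2*r) (B_ns r s)) = stP r x yp y (Suc s) S"
proof -
  have idx: "\<forall>nb\<in>set (B_ns r s). \<forall>kc\<in>set (fst nb). fst kc < 9 + 2*r"
    using idx_carry[of r] by (auto simp: B_ns_def)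
  define tu where "tu = (x+y+2)/4"
  define tw where "tw = (x-y+2)/4"
  have tr: "0 \<le> tu" "tu \<le> 1" "0 \<le> tw" "tw \<le> 1" using assms by (auto simp: tu_def tw_def)
  define gu where "gu = (hat^^s) tu"
  define gw where "gw = (hat^^s) tw"
  have n1: "0 \<le> Dsum s tu + hat gu / 4^s" using Dsum_nonneg[OF tr(1,2), of "Suc s"] by (simp add: Dsum_Suc gu_def)
  have n2: "0 \<le> Dsum s tw + hat gw / 4^s" using Dsum_nonneg[OF tr(3,4), of "Suc s"] by (simp add: Dsum_Suc gw_def)
  have T: "stP r x yp y (Suc s) S = [x+1, yp+1, y+1, relu (2*hat gu - 1), relu (1 - 2*hat gu),
      relu (Dsum s tu + hat gu / 4^s), relu (2*hat gw - 1), relu (1 - 2*hat gw), relu (Dsum s tw + hat gw / 4^s)] @ Sp r S"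
    unfolding stP_def tu_def[symmetric] tw_def[symmetric] using n1 n2
    by (simp add: Dsum_Suc relu_nonneg gu_def gw_def)
  have S: "stP r x yp y s S = [x+1, yp+1, y+1, relu (2*gu - 1), relu (1 - 2*gu), Dsum s tu,
      relu (2*gw - 1), relu (1 - 2*gw), Dsum s tw] @ Sp r S"
    unfolding stP_def tu_def[symmetric] tw_def[symmetric] gu_def gw_def ..
  have d: "0 \<le> Dsum s tu" "0 \<le> Dsum s tw" using Dsum_nonneg tr by auto
  show ?thesis
    unfolding H_def affine_mk[OF len_stP idx] T
    unfolding S B_ns_def map_map map_append o_def
    apply (subst carry_eval, simp)
    using assms d apply (simp add: relu_nonneg)
    apply (intro conjI)
    apply (simp_all only: hat_relu[of gu] hat_relu[of gw])
    apply (rule arg_cong[where f=relu], simp add: field_simps)+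
    done
qed


definition updS :: "nat \<Rightarrow> (nat \<Rightarrow> real) \<Rightarrow> ((nat \<times> real) list \<times> real) list" where
  "updS r c = pairs r (\<lambda>i. ([(9+2*i,1),(10+2*i,-1),(2, c i)], - c i)) (\<lambda>i. ([(9+2*i,-1),(10+2*i,1),(2, - c i)], c i))"

definition C_ns :: "nat \<Rightarrow> (nat \<Rightarrow> real) \<Rightarrow> ((nat \<times> real) list \<times> real) list" where
  "C_ns r c = [([(0,1)],0), ([(2,1)],0), ([(8,2),(5,-2),(1,-1)], 2), ([(8,2),(5,-2),(1,-1)], 0),
     ([],0), ([],0), ([],0), ([],0), ([],0)] @ updS r c"

lemma idx_upd: "\<forall>nb\<in>set (updS r c). \<forall>kc\<in>set (fst nb). fst kc < 9 + 2*r"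
  by (auto simp: updS_def set_pairs)

lemma upd_eval:
  assumes "length L = 9"
  shows "map (\<lambda>nb. relu (lin (fst nb) (L @ Sp r S) + snd nb)) (updS r c) = Sp r (\<lambda>i. S i + c i * (L ! 2 - 1))"
proof -
  have "map (\<lambda>nb. relu (lin (fst nb) (L @ Sp r S) + snd nb)) (updS r c)
     = pairs r (\<lambda>i. relu (S i + c i * (L ! 2 - 1))) (\<lambda>i. relu (- (S i + c i * (L ! 2 - 1))))"
    unfolding updS_def map_pairs
    apply (rule pairs_cong)
    subgoal for i
    proof -
      assume i: "i < r"
      have l2: "(L @ Sp r S) ! 2 = L ! 2" using assms by (simp add: nth_append)
      have e: "relu (S i) = S i + relu (- S i)" using relu_diff[of "S i"] by simp
      show ?thesis using nth_S9[OF assms i] l2 by (simp add: e algebra_simps)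
    qed
    subgoal for i
    proof -
      assume i: "i < r"
      have l2: "(L @ Sp r S) ! 2 = L ! 2" using assms by (simp add: nth_append)
      have e: "relu (S i) = S i + relu (- S i)" using relu_diff[of "S i"] by simp
      show ?thesis using nth_S9[OF assms i] l2 by (simp add: e algebra_simps)
    qed
    done
  then show ?thesis by (simp only: Sp_def)
qed

lemma layerC:
  assumes "\<bar>x\<bar> \<le> 1" "\<bar>yp\<bar> \<le> 1" "\<bar>y\<bar> \<le> 1"
  shows "H (stP r x yp y m S) (mk (9+2*r) (C_ns r c))
     = stR r x y (relu (2 * pa m x y - yp + 1)) (relu (2 * pa m x y - yp - 1)) (\<lambda>i. S i + c i * y)"
proof -
  have idx: "\<forall>nb\<in>set (C_ns r c). \<forall>kc\<in>set (fst nb). fst kc < 9 + 2*r"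
    using idx_upd[of r c] by (auto simp: C_ns_def)
  define tu where "tu = (x+y+2)/4"
  define tw where "tw = (x-y+2)/4"
  have tr: "0 \<le> tu" "tu \<le> 1" "0 \<le> tw" "tw \<le> 1" using assms by (auto simp: tu_def tw_def)
  define L where "L = [x+1, yp+1, y+1, relu (2 * (hat^^m) tu - 1), relu (1 - 2 * (hat^^m) tu), Dsum m tu,
     relu (2 * (hat^^m) tw - 1), relu (1 - 2 * (hat^^m) tw), Dsum m tw]"
  have S: "stP r x yp y m S = L @ Sp r S"
    unfolding stP_def tu_def[symmetric] tw_def[symmetric] L_def ..
  have lL: "length L = 9" by (simp add: L_def)
  have pa: "pa m x y = Dsum m tw - Dsum m tu" by (simp add: pa_def tu_def tw_def)
  have u: "map (\<lambda>nb. relu (lin (fst nb) (L @ Sp r S) + snd nb)) (updS r c) = Sp r (\<lambda>i. S i + c i * y)"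
    using upd_eval[OF lL] by (simp add: L_def)
  show ?thesis
    unfolding H_def S affine_mk[OF len_stP[of r x yp y m S, unfolded S] idx]
    unfolding C_ns_def map_map map_append o_def u[unfolded o_def]
    unfolding stR_def pa
    using assms apply (simp add: relu_nonneg nth_append L_def)
    apply (intro conjI)
    apply (rule arg_cong[where f=relu], simp add: field_simps)+
    done
qed

definition I_ns :: "nat \<Rightarrow> (nat \<Rightarrow> real) \<Rightarrow> ((nat \<times> real) list \<times> real) list" where
  "I_ns r c0 = [([(0,1)],1), ([],2), ([(0,1)],1), ([(0,1)],-1), ([],0), ([],0), ([],0), ([],0), ([],0)]
     @ pairs r (\<lambda>i. ([], c0 i)) (\<lambda>i. ([], - c0 i))"

lemma layerI:
  assumes "\<bar>x\<bar> \<le> 1"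
  shows "H [x] (mk 1 (I_ns r c0)) = stR r x 1 (relu (x+1)) (relu (x-1)) c0"
proof -
  have idx: "\<forall>nb\<in>set (I_ns r c0). \<forall>kc\<in>set (fst nb). fst kc < 1"
    by (auto simp: I_ns_def set_pairs)
  have a: "affine (mk 1 (I_ns r c0)) [x] = map (\<lambda>nb. lin (fst nb) [x] + snd nb) (I_ns r c0)"
    by (rule affine_mk) (use idx in auto)
  show ?thesis
    unfolding H_def a
    unfolding stR_def I_ns_def Sp_def map_map map_append o_def map_pairs
    using assms by (simp add: relu_nonneg add.commute)
qed

definition F_ns :: "nat \<Rightarrow> (nat \<Rightarrow> real) \<Rightarrow> ((nat \<times> real) list \<times> real) list" where
  "F_ns r c = map (\<lambda>i. ([(9+2*i,1),(10+2*i,-1),(2,c i),(3,-c i)], -c i)) [0..<r]"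

lemma layerF:
  "affine (mk (9+2*r) (F_ns r c)) (stR r x yp a b S) = map (\<lambda>i. S i + c i * (a - b - 1)) [0..<r]"
proof -
  have idx: "\<forall>nb\<in>set (F_ns r c). \<forall>kc\<in>set (fst nb). fst kc < 9 + 2*r"
    by (auto simp: F_ns_def)
  define L where "L = [x+1, yp+1, a, b, 0, 0, 0, 0, (0::real)]"
  have lL: "length L = 9" by (simp add: L_def)
  have S: "stR r x yp a b S = L @ Sp r S" by (simp add: stR_def L_def)
  have a: "affine (mk (9+2*r) (F_ns r c)) (L @ Sp r S) = map (\<lambda>nb. lin (fst nb) (L @ Sp r S) + snd nb) (F_ns r c)"
    by (rule affine_mk) (use idx lL in \<open>auto simp: Sp_def\<close>)
  show ?thesis
    unfolding S a unfolding F_ns_def map_map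
  proof (rule map_cong[OF refl])
    fix i assume "i \<in> set [0..<r]"
    then have i: "i < r" by simp
    have e: "relu (S i) - relu (- S i) = S i" by (rule relu_diff)
    show "((\<lambda>nb. lin (fst nb) (L @ Sp r S) + snd nb) \<circ> (\<lambda>i. ([(9 + 2 * i, 1), (10 + 2 * i, - 1), (2, c i), (3, - c i)], - c i))) i
      = S i + c i * (a - b - 1)"
      using nth_S9[OF lL i] e by (simp add: nth_append L_def algebra_simps)
  qed
qed



definition stepL :: "nat \<Rightarrow> nat \<Rightarrow> (nat \<Rightarrow> real) \<Rightarrow> layer list" where
  "stepL r m c = mk (9+2*r) (A_ns r) # map (\<lambda>s. mk (9+2*r) (B_ns r s)) [0..<m] @ [mk (9+2*r) (C_ns r c)]"

definition mids :: "nat \<Rightarrow> nat \<Rightarrow> nat \<Rightarrow> (nat \<Rightarrow> nat \<Rightarrow> real) \<Rightarrow> layer list" where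
  "mids r m n cc = concat (map (\<lambda>j. stepL r m (\<lambda>i. cc i (Suc j))) [0..<n-1])"

definition net :: "nat \<Rightarrow> nat \<Rightarrow> nat \<Rightarrow> (nat \<Rightarrow> nat \<Rightarrow> real) \<Rightarrow> layer list" where
  "net r m n cc = mk 1 (I_ns r (\<lambda>i. cc i 0)) # mids r m n cc @ [mk (9+2*r) (F_ns r (\<lambda>i. cc i n))]"

definition Rst :: "nat \<Rightarrow> nat \<Rightarrow> real \<Rightarrow> (nat \<Rightarrow> nat \<Rightarrow> real) \<Rightarrow> nat \<Rightarrow> real list" where
  "Rst r m x cc j = stR r x (fst (yy m x j)) (relu (snd (yy m x j) + 1)) (relu (snd (yy m x j) - 1))
      (\<lambda>i. \<Sum>l\<le>j. cc i l * fst (yy m x l))"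

lemma B_chain: assumes "\<bar>x\<bar> \<le> 1" "\<bar>yp\<bar> \<le> 1" "\<bar>y\<bar> \<le> 1"
  shows "foldl H (stP r x yp y 0 S) (map (\<lambda>s. mk (9+2*r) (B_ns r s)) [0..<k]) = stP r x yp y k S"
  by (induction k) (simp_all add: layerB[OF assms])

lemma step_sem: assumes "\<bar>x\<bar> \<le> 1"
  shows "foldl H (Rst r m x cc j) (stepL r m (\<lambda>i. cc i (Suc j))) = Rst r m x cc (Suc j)"
proof -
  define v where "v = snd (yy m x j)"
  define yp where "yp = fst (yy m x j)"
  define S where "S = (\<lambda>i. \<Sum>l\<le>j. cc i l * fst (yy m x l))"
  have yp1: "\<bar>yp\<bar> \<le> 1" by (simp add: yp_def yy_fst_bound)
  have y1: "\<bar>clip v\<bar> \<le> 1" by (rule clip_bound)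
  have ab: "relu (v + 1) = clip v + 1 + relu (v - 1)" using relu_clip[of v] by simp
  have R: "Rst r m x cc j = stR r x yp (relu (v + 1)) (relu (v - 1)) S"
    by (simp add: Rst_def v_def yp_def S_def)
  have R': "Rst r m x cc (Suc j) = stR r x (clip v) (relu (2 * pa m x (clip v) - yp + 1)) (relu (2 * pa m x (clip v) - yp - 1))
      (\<lambda>i. S i + cc i (Suc j) * clip v)"
    by (simp add: Rst_def v_def yp_def S_def)
  show ?thesis
    unfolding R R' stepL_def
    by (simp add: layerA[OF assms yp1 y1 ab] B_chain[OF assms yp1 y1] layerC[OF assms yp1 y1])
qed

lemma mids_sem: assumes "\<bar>x\<bar> \<le> 1"
  shows "foldl H (Rst r m x cc 0) (concat (map (\<lambda>j. stepL r m (\<lambda>i. cc i (Suc j))) [0..<k])) = Rst r m x cc k"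
  by (induction k) (simp_all add: step_sem[OF assms])

lemma net_out: assumes "\<bar>x\<bar> \<le> 1" "1 \<le> n"
  shows "realize (net r m n cc) [x] = map (\<lambda>i. \<Sum>l\<le>n. cc i l * fst (yy m x l)) [0..<r]"
proof -
  have I: "H [x] (mk 1 (I_ns r (\<lambda>i. cc i 0))) = Rst r m x cc 0"
    unfolding layerI[OF assms(1)] by (simp add: Rst_def)
  have n: "n = Suc (n - 1)" using assms(2) by simp
  have "realize (net r m n cc) [x] = affine (mk (9+2*r) (F_ns r (\<lambda>i. cc i n))) (Rst r m x cc (n-1))"
    unfolding net_def realize_snoc[of "_ # _", simplified] foldl_Cons I mids_def mids_sem[OF assms(1)] ..
  also have "\<dots> = map (\<lambda>i. \<Sum>l\<le>n. cc i l * fst (yy m x l)) [0..<r]"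
    unfolding Rst_def layerF
  proof (rule map_cong[OF refl])
    fix i
    have e: "relu (snd (yy m x (n-1)) + 1) - relu (snd (yy m x (n-1)) - 1) - 1 = fst (yy m x n)"
      by (subst n) (simp add: relu_clip)
    show "(\<Sum>l\<le>n - 1. cc i l * fst (yy m x l)) + cc i n * (relu (snd (yy m x (n - 1)) + 1) - relu (snd (yy m x (n - 1)) - 1) - 1)
        = (\<Sum>l\<le>n. cc i l * fst (yy m x l))"
    proof -
      obtain k where k: "n = Suc k" using assms(2) by (cases n) auto
      show ?thesis unfolding e unfolding k by simp
    qed
  qed
  finally show ?thesis .
qed


lemma len_carryS[simp]: "length (carryS r) = 2*r" by (simp add: carryS_def)
lemma len_updS[simp]: "length (updS r c) = 2*r" by (simp add: updS_def)

lemma len_stepL: "length (stepL r m c) = m + 2" by (simp add: stepL_def)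

lemma len_mids: "length (mids r m n cc) = (n-1)*(m+2)"
  by (simp add: mids_def length_concat o_def len_stepL sum_list_triv)

lemma set_stepL: "l \<in> set (stepL r m c) \<Longrightarrow> l = mk (9+2*r) (A_ns r) \<or> (\<exists>s. l = mk (9+2*r) (B_ns r s)) \<or> l = mk (9+2*r) (C_ns r c)"
  by (auto simp: stepL_def)

lemma set_mids: "l \<in> set (mids r m n cc) \<Longrightarrow> \<exists>j<n-1. l \<in> set (stepL r m (\<lambda>i. cc i (Suc j)))"
  by (auto simp: mids_def)

lemma mids_shape: "\<forall>l\<in>set (mids r m n cc). \<exists>ns. l = mk (9+2*r) ns \<and> length ns = 9+2*r"
proof
  fix l assume "l \<in> set (mids r m n cc)"
  then obtain j where "l \<in> set (stepL r m (\<lambda>i. cc i (Suc j)))" using set_mids by blast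
  then have "l = mk (9+2*r) (A_ns r) \<or> (\<exists>s. l = mk (9+2*r) (B_ns r s)) \<or> l = mk (9+2*r) (C_ns r (\<lambda>i. cc i (Suc j)))"
    by (rule set_stepL)
  then show "\<exists>ns. l = mk (9+2*r) ns \<and> length ns = 9+2*r"
  proof (elim disjE exE)
    assume "l = mk (9+2*r) (A_ns r)"
    then show ?thesis by (intro exI[of _ "A_ns r"]) (simp add: A_ns_def)
  next
    fix s assume "l = mk (9+2*r) (B_ns r s)"
    then show ?thesis by (intro exI[of _ "B_ns r s"]) (simp add: B_ns_def)
  next
    assume "l = mk (9+2*r) (C_ns r (\<lambda>i. cc i (Suc j)))"
    then show ?thesis by (intro exI[of _ "C_ns r (\<lambda>i. cc i (Suc j))"]) (simp add: C_ns_def)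
  qed
qed

lemma arch_net: "arch 1 (net r m n cc) r"
proof -
  have a: "arch (9+2*r) (mids r m n cc @ [mk (9+2*r) (F_ns r (\<lambda>i. cc i n))]) r"
    by (rule arch_chain[OF mids_shape]) (simp add: F_ns_def)
  have l: "length (I_ns r (\<lambda>i. cc i 0)) = 9+2*r" by (simp add: I_ns_def)
  show ?thesis unfolding net_def
    by (rule arch_mk_cons[of _ "I_ns r (\<lambda>i. cc i 0)", unfolded l]) (simp_all add: a)
qed

lemma depth_net: "depth (net r m n cc) = 2 + (n-1)*(m+2)"
  by (simp add: depth_def net_def len_mids)

lemma width_net: "width 1 (net r m n cc) \<le> 9+2*r"
proof (rule width_le)
  show "\<forall>l\<in>set (net r m n cc). length (fst l) \<le> 9 + 2 * r"
  proof
    fix l assume "l \<in> set (net r m n cc)"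
    then consider "l = mk 1 (I_ns r (\<lambda>i. cc i 0))" | "l \<in> set (mids r m n cc)" | "l = mk (9+2*r) (F_ns r (\<lambda>i. cc i n))"
      by (auto simp: net_def)
    then show "length (fst l) \<le> 9 + 2 * r"
    proof cases
      case 1 then show ?thesis by (simp add: len_mk I_ns_def)
    next
      case 2
      then obtain ns where "l = mk (9+2*r) ns" "length ns = 9+2*r" using mids_shape[of r m n cc] by blast
      then show ?thesis by (simp add: len_mk)
    next
      case 3 then show ?thesis by (simp add: len_mk F_ns_def)
    qed
  qed
qed simp

lemma okn_carry: "1 \<le> B \<Longrightarrow> okn B (9+2*r) (carryS r)"
  by (auto simp: okn_def carryS_def set_pairs)

lemma okn_A: "2 \<le> B \<Longrightarrow> okn B (9+2*r) (A_ns r)"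
  unfolding A_ns_def okn_append using okn_carry[of B r] by (auto simp: okn_def)

lemma okn_B: "2 \<le> B \<Longrightarrow> okn B (9+2*r) (B_ns r s)"
proof -
  assume B: "2 \<le> B"
  have q: "(1::real)/4^s \<le> 1" by simp
  have q0: "(0::real) \<le> 1/4^s" by simp
  have q2: "1/4^s \<le> B" using q B by linarith
  show ?thesis
    unfolding B_ns_def okn_append using okn_carry[of B r] B q2 q0 by (auto simp: okn_def)
qed

lemma okn_C: "2 \<le> B \<Longrightarrow> \<forall>i<r. \<bar>c i\<bar> \<le> B \<Longrightarrow> okn B (9+2*r) (C_ns r c)"
  unfolding C_ns_def okn_append by (auto simp: okn_def updS_def set_pairs)

lemma okn_I: "2 \<le> B \<Longrightarrow> \<forall>i<r. \<bar>c i\<bar> \<le> B \<Longrightarrow> okn B 1 (I_ns r c)"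
  unfolding I_ns_def okn_append by (auto simp: okn_def set_pairs)

lemma okn_F: "2 \<le> B \<Longrightarrow> \<forall>i<r. \<bar>c i\<bar> \<le> B \<Longrightarrow> okn B (9+2*r) (F_ns r c)"
  by (auto simp: okn_def F_ns_def)

lemma weights_net:
  assumes "2 \<le> B" "\<forall>i<r. \<forall>k\<le>n. \<bar>cc i k\<bar> \<le> B"
  shows "\<forall>w\<in>set (weights (net r m n cc)). \<bar>w\<bar> \<le> B"
proof (rule weights_all, rule ballI)
  have B0: "0 \<le> B" using assms by simp
  fix l assume "l \<in> set (net r m n cc)"
  then consider "l = mk 1 (I_ns r (\<lambda>i. cc i 0))" | "l \<in> set (mids r m n cc)" | "l = mk (9+2*r) (F_ns r (\<lambda>i. cc i n))"
    by (auto simp: net_def)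
  then show "\<forall>w\<in>set (concat (fst l) @ snd l). \<bar>w\<bar> \<le> B"
  proof cases
    case 1
    have cb0: "\<forall>i<r. \<bar>cc i 0\<bar> \<le> B" using assms(2) by auto
    show ?thesis unfolding 1 by (rule weights_mk[OF okn_I[OF assms(1) cb0] B0])
  next
    case 2
    then obtain j where j: "j < n-1" "l \<in> set (stepL r m (\<lambda>i. cc i (Suc j)))" using set_mids by blast
    have cb: "\<forall>i<r. \<bar>cc i (Suc j)\<bar> \<le> B" using assms(2) j(1) by auto
    from set_stepL[OF j(2)] show ?thesis
    proof (elim disjE exE)
      assume l: "l = mk (9+2*r) (A_ns r)"
      show ?thesis unfolding l by (rule weights_mk[OF okn_A[OF assms(1)] B0])
    next
      fix s assume l: "l = mk (9+2*r) (B_ns r s)"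
      show ?thesis unfolding l by (rule weights_mk[OF okn_B[OF assms(1)] B0])
    next
      assume l: "l = mk (9+2*r) (C_ns r (\<lambda>i. cc i (Suc j)))"
      show ?thesis unfolding l by (rule weights_mk[OF okn_C[OF assms(1) cb] B0])
    qed
  next
    case 3
    have cbn: "\<forall>i<r. \<bar>cc i n\<bar> \<le> B" using assms(2) by auto
    show ?thesis unfolding 3 by (rule weights_mk[OF okn_F[OF assms(1) cbn] B0])
  qed
qed

lemma net_err:
  assumes "\<bar>x\<bar> \<le> 1" "1 \<le> n" "i < r" "\<forall>k\<le>n. \<bar>cc i k\<bar> \<le> M"
  shows "\<bar>realize (net r m n cc) [x] ! i - (\<Sum>k=0..n. cc i k * cheb k x)\<bar> \<le> (n+1) * M * 5^n / 4^m"
proof -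
  have M0: "0 \<le> M" using assms(4) by (meson abs_ge_zero order_trans order_refl)
  have "realize (net r m n cc) [x] ! i - (\<Sum>k=0..n. cc i k * cheb k x) = (\<Sum>k=0..n. cc i k * (fst (yy m x k) - cheb k x))"
    using assms(3) by (simp add: net_out[OF assms(1,2)] atLeast0AtMost sum_subtractf[symmetric] algebra_simps)
  also have "\<bar>\<dots>\<bar> \<le> (\<Sum>k=0..n. \<bar>cc i k * (fst (yy m x k) - cheb k x)\<bar>)" by (rule sum_abs)
  also have "\<dots> \<le> (\<Sum>k=0..n. M * (5^n / 4^m))"
  proof (rule sum_mono)
    fix k assume k: "k \<in> {0..n}"
    have "\<bar>fst (yy m x k) - cheb k x\<bar> \<le> 5^k / 4^m" using yy_err[OF assms(1)] by blast
    also have "\<dots> \<le> 5^n / 4^m" using k by (intro divide_right_mono power_increasing) auto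
    finally have e: "\<bar>fst (yy m x k) - cheb k x\<bar> \<le> 5^n / 4^m" .
    show "\<bar>cc i k * (fst (yy m x k) - cheb k x)\<bar> \<le> M * (5^n / 4^m)"
      unfolding abs_mult using assms(4) k e by (intro mult_mono) auto
  qed
  also have "\<dots> = (n+1) * M * 5^n / 4^m" by simp
  finally show ?thesis by (simp add: add.commute)
qed



lemma pow4_ge: fixes t :: real assumes "0 \<le> t" shows "t \<le> 4 ^ nat \<lceil>t\<rceil>"
proof -
  have "t \<le> real (nat \<lceil>t\<rceil>)" by linarith
  then have "exp t \<le> exp (real (nat \<lceil>t\<rceil>))" by simp
  also have "exp (real (nat \<lceil>t\<rceil>)) = exp 1 ^ nat \<lceil>t\<rceil>" using exp_of_nat_mult[of "nat \<lceil>t\<rceil>" 1] by simp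
  also have "\<dots> \<le> 4 ^ nat \<lceil>t\<rceil>" using exp_le by (intro power_mono) auto
  finally have "exp t \<le> 4 ^ nat \<lceil>t\<rceil>" .
  moreover have "t \<le> exp t" using exp_ge_add_one_self[of t] by linarith
  ultimately show ?thesis by linarith
qed

lemma choose_m:
  fixes K M :: real and n :: nat
  assumes "1 \<le> n" "0 < M" "0 < K"
  shows "\<forall>\<^sub>F \<epsilon> in at_right 0. \<exists>m::nat. K / 4^m \<le> \<epsilon> \<and>
     real (2 + (n-1)*(m+2)) \<le> 2 * (real n ^ 2 + real n * ln (1/\<epsilon>) + real n * ln M)"
proof -
  define Z where "Z = 5 + \<bar>ln K\<bar> + 2 * \<bar>ln M\<bar>"
  show ?thesis unfolding eventually_at_right_field
  proof (intro exI[of _ "exp (- Z)"] conjI allI impI)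
    show "0 < exp (- Z)" by simp
    fix \<epsilon> :: real assume e0: "0 < \<epsilon>" and eb: "\<epsilon> < exp (- Z)"
    define l where "l = ln (1/\<epsilon>)"
    have lZ: "Z < l"
    proof -
      have "ln \<epsilon> < - Z" using eb e0 by (metis ln_exp ln_less_cancel_iff exp_gt_zero)
      then show ?thesis using e0 by (simp add: l_def ln_div)
    qed
    define t where "t = ln K + l"
    have t0: "0 \<le> t" using lZ by (simp add: t_def Z_def)
    define m where "m = nat \<lceil>t\<rceil>"
    have mc: "real m = real_of_int \<lceil>t\<rceil>" using t0 by (simp add: m_def)
    have m1: "real m \<le> t + 1" using mc ceiling_correct[of t] by linarith
    have "t \<le> 4^m" using pow4_ge[OF t0] by (simp add: m_def)
    then have "exp t \<le> exp (real m * ln 4)"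
    proof -
      have "t \<le> real m" using mc by simp
      moreover have "real m \<le> real m * ln 4"
      proof -
        have "1 \<le> ln (4::real)"
        proof -
          have "exp 1 \<le> (4::real)" using exp_le by linarith
          then show ?thesis by (simp add: ln_ge_iff)
        qed
        then show ?thesis by (simp add: mult_le_cancel_left1)
      qed
      ultimately show ?thesis by simp
    qed
    moreover have "exp t = K / \<epsilon>" using assms(3) e0 by (simp add: t_def l_def exp_diff ln_div)
    moreover have "exp (real m * ln 4) = 4^m" using exp_of_nat_mult[of m "ln (4::real)"] by simp
    ultimately have "K / \<epsilon> \<le> 4^m" by simp
    then have c1: "K / 4^m \<le> \<epsilon>" using e0 by (simp add: field_simps)
    define N where "N = real n"
    have N1: "1 \<le> N" using assms(1) by (simp add: N_def)
    define X where "X = l - ln K - 3 + 2 * ln M"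
    have X2: "2 \<le> X" using lZ by (simp add: X_def Z_def)
    have NX: "2 \<le> N * X" using mult_mono[OF N1 X2] N1 by simp
    have L1: "real (2 + (n-1)*(m+2)) \<le> 2 + N * (real m + 2)"
    proof -
      obtain k where k: "n = Suc k" using assms(1) by (cases n) auto
      have "real (2 + (n-1)*(m+2)) = 2 + (N - 1) * (real m + 2)" unfolding N_def k by (simp add: algebra_simps)
      also have "\<dots> \<le> 2 + N * (real m + 2)" by (simp add: algebra_simps)
      finally show ?thesis .
    qed
    have L2: "N * (real m + 2) \<le> N * (t + 3)" using m1 N1 by (intro mult_left_mono) auto
    have NN0: "0 \<le> N^2" by simp
    have "2 + N * (t + 3) \<le> 2 * (N^2 + N * l + N * ln M)"
      using NX unfolding t_def X_def by (simp add: algebra_simps) (use zero_le_power2[of N] in linarith)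
    then have c2: "real (2 + (n-1)*(m+2)) \<le> 2 * (real n ^ 2 + real n * ln (1/\<epsilon>) + real n * ln M)"
      using L1 L2 by (simp add: N_def l_def)
    show "\<exists>m::nat. K / 4^m \<le> \<epsilon> \<and> real (2 + (n-1)*(m+2)) \<le> 2 * (real n ^ 2 + real n * ln (1/\<epsilon>) + real n * ln M)"
      using c1 c2 by blast
  qed
qed


lemma Max_facts:
  fixes f :: "nat \<Rightarrow> real"
  assumes "\<exists>k\<le>n. f k \<noteq> 0" "\<And>k. 0 \<le> f k"
  shows "\<forall>k\<le>n. f k \<le> Max (f ` {0..n})" "0 < Max (f ` {0..n})"
proof -
  show a: "\<forall>k\<le>n. f k \<le> Max (f ` {0..n})" by auto
  obtain k where k: "k \<le> n" "f k \<noteq> 0" using assms(1) by blast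
  have "0 < f k" using k(2) assms(2)[of k] by simp
  moreover have "f k \<le> Max (f ` {0..n})" using a k(1) by blast
  ultimately show "0 < Max (f ` {0..n})" by linarith
qed

theorem propositionA1:
  shows "\<exists>C>0::real.
    (\<forall>(n::nat) (a::nat \<Rightarrow> real). n \<ge> 1 \<longrightarrow> (\<exists>k\<le>n. a k \<noteq> 0) \<longrightarrow>
      (\<forall>\<^sub>F \<epsilon> in at_right 0. \<exists>L::nat. \<exists>\<Phi>\<in>NN L 13 1 1.
         real L \<le> C * (real n ^ 2 + real n * ln (1 / \<epsilon>)
                         + real n * ln (Max ((\<lambda>k. \<bar>a k\<bar>) ` {0..n}))) \<and>
         (\<forall>x\<in>{-1<..<1}. \<bar>(\<Sum>k=0..n. a k * cheb k x) - realize \<Phi> [x] ! 0\<bar> \<le> \<epsilon>) \<and>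
         (\<forall>w\<in>set (weights \<Phi>). \<bar>w\<bar> \<le> max (Max ((\<lambda>k. \<bar>a k\<bar>) ` {0..n})) 2)))
  \<and> (\<forall>(n::nat) (a::nat \<Rightarrow> complex). n \<ge> 1 \<longrightarrow> (\<exists>k\<le>n. a k \<noteq> 0) \<longrightarrow>
      (\<forall>\<^sub>F \<epsilon> in at_right 0. \<exists>L::nat. \<exists>\<Phi>\<in>NN L 15 1 2.
         real L \<le> C * (real n ^ 2 + real n * ln (1 / \<epsilon>)
                         + real n * ln (Max ((\<lambda>k. cmod (a k)) ` {0..n}))) \<and>
         (\<forall>x\<in>{-1<..<1}. cmod ((\<Sum>k=0..n. a k * complex_of_real (cheb k x))
              - (complex_of_real (realize \<Phi> [x] ! 0) + \<i> * complex_of_real (realize \<Phi> [x] ! 1))) \<le> \<epsilon>) \<and>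
         (\<forall>w\<in>set (weights \<Phi>). \<bar>w\<bar> \<le> max (Max ((\<lambda>k. cmod (a k)) ` {0..n})) 2)))"
proof (intro exI[of _ "2::real"] conjI allI impI)
  show "(0::real) < 2" by simp
next
  fix n :: nat and a :: "nat \<Rightarrow> real"
  assume n1: "n \<ge> 1" and ex: "\<exists>k\<le>n. a k \<noteq> 0"
  define M where "M = Max ((\<lambda>k. \<bar>a k\<bar>) ` {0..n})"
  have Mge: "\<forall>k\<le>n. \<bar>a k\<bar> \<le> M" and M0: "0 < M"
    using Max_facts[of n "\<lambda>k. \<bar>a k\<bar>"] ex unfolding M_def by auto
  define cc where "cc = (\<lambda>(i::nat) k. a k)"
  define K where "K = 2 * (real n + 1) * M * 5^n"
  have K0: "0 < K" using M0 by (simp add: K_def)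
  show "\<forall>\<^sub>F \<epsilon> in at_right 0. \<exists>L::nat. \<exists>\<Phi>\<in>NN L 13 1 1.
         real L \<le> 2 * (real n ^ 2 + real n * ln (1 / \<epsilon>)
                         + real n * ln (Max ((\<lambda>k. \<bar>a k\<bar>) ` {0..n}))) \<and>
         (\<forall>x\<in>{-1<..<1}. \<bar>(\<Sum>k=0..n. a k * cheb k x) - realize \<Phi> [x] ! 0\<bar> \<le> \<epsilon>) \<and>
         (\<forall>w\<in>set (weights \<Phi>). \<bar>w\<bar> \<le> max (Max ((\<lambda>k. \<bar>a k\<bar>) ` {0..n})) 2)"
    unfolding M_def[symmetric]
  proof (rule eventually_mono[OF choose_m[OF n1 M0 K0]])
    fix \<epsilon> :: real
    assume "\<exists>m::nat. K / 4^m \<le> \<epsilon> \<and> real (2 + (n-1)*(m+2)) \<le> 2 * (real n ^ 2 + real n * ln (1/\<epsilon>) + real n * ln M)"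
    then obtain m :: nat where m1: "K / 4^m \<le> \<epsilon>"
      and m2: "real (2 + (n-1)*(m+2)) \<le> 2 * (real n ^ 2 + real n * ln (1/\<epsilon>) + real n * ln M)" by blast
    define \<Phi> where "\<Phi> = net 1 m n cc"
    have inNN: "\<Phi> \<in> NN (2 + (n-1)*(m+2)) 13 1 1"
      using arch_net[of 1 m n cc] depth_net[of 1 m n cc] width_net[of 1 m n cc]
      by (simp add: NN_def \<Phi>_def)
    have err: "\<bar>(\<Sum>k=0..n. a k * cheb k x) - realize \<Phi> [x] ! 0\<bar> \<le> \<epsilon>" if x: "x \<in> {-1<..<1}" for x
    proof -
      have x1: "\<bar>x\<bar> \<le> 1" using x by auto
      have "\<bar>realize \<Phi> [x] ! 0 - (\<Sum>k=0..n. cc 0 k * cheb k x)\<bar> \<le> (real n + 1) * M * 5^n / 4^m"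
        unfolding \<Phi>_def by (rule net_err[OF x1 n1]) (use Mge in \<open>auto simp: cc_def\<close>)
      also have "\<dots> \<le> K / 4^m" unfolding K_def using M0 by (simp add: divide_right_mono)
      finally show ?thesis using m1 by (simp add: cc_def abs_minus_commute)
    qed
    have wts: "\<forall>w\<in>set (weights \<Phi>). \<bar>w\<bar> \<le> max M 2"
      unfolding \<Phi>_def by (rule weights_net) (use Mge in \<open>auto simp: cc_def\<close>)
    show "\<exists>L::nat. \<exists>\<Phi>\<in>NN L 13 1 1.
         real L \<le> 2 * (real n ^ 2 + real n * ln (1 / \<epsilon>) + real n * ln M) \<and>
         (\<forall>x\<in>{-1<..<1}. \<bar>(\<Sum>k=0..n. a k * cheb k x) - realize \<Phi> [x] ! 0\<bar> \<le> \<epsilon>) \<and>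
         (\<forall>w\<in>set (weights \<Phi>). \<bar>w\<bar> \<le> max M 2)"
      using inNN m2 err wts by blast
  qed
next
  fix n :: nat and a :: "nat \<Rightarrow> complex"
  assume n1: "n \<ge> 1" and ex: "\<exists>k\<le>n. a k \<noteq> 0"
  define M where "M = Max ((\<lambda>k. cmod (a k)) ` {0..n})"
  have Mge: "\<forall>k\<le>n. cmod (a k) \<le> M" and M0: "0 < M"
    using Max_facts[of n "\<lambda>k. cmod (a k)"] ex unfolding M_def by auto
  define cc where "cc = (\<lambda>(i::nat) k. if i = 0 then Re (a k) else Im (a k))"
  have ccb: "\<forall>i<2. \<forall>k\<le>n. \<bar>cc i k\<bar> \<le> M"
  proof (intro allI impI)
    fix i k :: nat assume "i < 2" "k \<le> n"
    then have "cmod (a k) \<le> M" using Mge by blast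
    then show "\<bar>cc i k\<bar> \<le> M" unfolding cc_def
      using abs_Re_le_cmod[of "a k"] abs_Im_le_cmod[of "a k"] by auto
  qed
  define K where "K = 2 * (real n + 1) * M * 5^n"
  have K0: "0 < K" using M0 by (simp add: K_def)
  show "\<forall>\<^sub>F \<epsilon> in at_right 0. \<exists>L::nat. \<exists>\<Phi>\<in>NN L 15 1 2.
         real L \<le> 2 * (real n ^ 2 + real n * ln (1 / \<epsilon>)
                         + real n * ln (Max ((\<lambda>k. cmod (a k)) ` {0..n}))) \<and>
         (\<forall>x\<in>{-1<..<1}. cmod ((\<Sum>k=0..n. a k * complex_of_real (cheb k x))
              - (complex_of_real (realize \<Phi> [x] ! 0) + \<i> * complex_of_real (realize \<Phi> [x] ! 1))) \<le> \<epsilon>) \<and>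
         (\<forall>w\<in>set (weights \<Phi>). \<bar>w\<bar> \<le> max (Max ((\<lambda>k. cmod (a k)) ` {0..n})) 2)"
    unfolding M_def[symmetric]
  proof (rule eventually_mono[OF choose_m[OF n1 M0 K0]])
    fix \<epsilon> :: real
    assume "\<exists>m::nat. K / 4^m \<le> \<epsilon> \<and> real (2 + (n-1)*(m+2)) \<le> 2 * (real n ^ 2 + real n * ln (1/\<epsilon>) + real n * ln M)"
    then obtain m :: nat where m1: "K / 4^m \<le> \<epsilon>"
      and m2: "real (2 + (n-1)*(m+2)) \<le> 2 * (real n ^ 2 + real n * ln (1/\<epsilon>) + real n * ln M)" by blast
    define \<Phi> where "\<Phi> = net 2 m n cc"
    have inNN: "\<Phi> \<in> NN (2 + (n-1)*(m+2)) 15 1 2"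
      using arch_net[of 2 m n cc] depth_net[of 2 m n cc] width_net[of 2 m n cc]
      by (simp add: NN_def \<Phi>_def)
    have err: "cmod ((\<Sum>k=0..n. a k * complex_of_real (cheb k x))
              - (complex_of_real (realize \<Phi> [x] ! 0) + \<i> * complex_of_real (realize \<Phi> [x] ! 1))) \<le> \<epsilon>"
      if x: "x \<in> {-1<..<1}" for x
    proof -
      have x1: "\<bar>x\<bar> \<le> 1" using x by auto
      define z where "z = (\<Sum>k=0..n. a k * complex_of_real (cheb k x))
              - (complex_of_real (realize \<Phi> [x] ! 0) + \<i> * complex_of_real (realize \<Phi> [x] ! 1))"
      have e0: "\<bar>realize \<Phi> [x] ! 0 - (\<Sum>k=0..n. cc 0 k * cheb k x)\<bar> \<le> (real n + 1) * M * 5^n / 4^m"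
        unfolding \<Phi>_def by (rule net_err[OF x1 n1]) (use ccb in auto)
      have e1: "\<bar>realize \<Phi> [x] ! 1 - (\<Sum>k=0..n. cc 1 k * cheb k x)\<bar> \<le> (real n + 1) * M * 5^n / 4^m"
        unfolding \<Phi>_def by (rule net_err[OF x1 n1]) (use ccb in auto)
      have re: "Re z = (\<Sum>k=0..n. cc 0 k * cheb k x) - realize \<Phi> [x] ! 0"
        by (simp add: z_def cc_def Re_sum)
      have im: "Im z = (\<Sum>k=0..n. cc 1 k * cheb k x) - realize \<Phi> [x] ! 1"
        by (simp add: z_def cc_def Im_sum)
      have "cmod z \<le> \<bar>Re z\<bar> + \<bar>Im z\<bar>" by (rule cmod_le)
      also have "\<dots> \<le> 2 * ((real n + 1) * M * 5^n / 4^m)"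
      proof -
        have r1: "\<bar>Re z\<bar> \<le> (real n + 1) * M * 5^n / 4^m"
          using e0 unfolding re by (simp add: abs_minus_commute)
        have r2: "\<bar>Im z\<bar> \<le> (real n + 1) * M * 5^n / 4^m"
          using e1 unfolding im by (simp add: abs_minus_commute)
        show ?thesis using r1 r2 by linarith
      qed
      also have "\<dots> = K / 4^m" by (simp add: K_def)
      finally show ?thesis using m1 by (simp add: z_def)
    qed
    have wts: "\<forall>w\<in>set (weights \<Phi>). \<bar>w\<bar> \<le> max M 2"
    proof -
      have "\<forall>i<2. \<forall>k\<le>n. \<bar>cc i k\<bar> \<le> max M 2"
      proof (intro allI impI)
        fix i k :: nat assume "i < 2" "k \<le> n"
        then have "\<bar>cc i k\<bar> \<le> M" using ccb by blast
        then show "\<bar>cc i k\<bar> \<le> max M 2" by linarith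
      qed
      then show ?thesis unfolding \<Phi>_def by (intro weights_net) auto
    qed
    show "\<exists>L::nat. \<exists>\<Phi>\<in>NN L 15 1 2.
         real L \<le> 2 * (real n ^ 2 + real n * ln (1 / \<epsilon>) + real n * ln M) \<and>
         (\<forall>x\<in>{-1<..<1}. cmod ((\<Sum>k=0..n. a k * complex_of_real (cheb k x))
              - (complex_of_real (realize \<Phi> [x] ! 0) + \<i> * complex_of_real (realize \<Phi> [x] ! 1))) \<le> \<epsilon>) \<and>
         (\<forall>w\<in>set (weights \<Phi>). \<bar>w\<bar> \<le> max M 2)"
      using inNN m2 err wts by blast
  qed
qed

end
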